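(* Let $K$ be a field and let $\Delta$ be a simplicial complex on the vertex set $V\cup V'$, where $V\cap V'=\emptyset$ and $|V|=|V'|=n$. Suppose that the set $G=\{F\in\mathcal F(\Delta): F\cap V\neq\emptyset,\ F\cap V'\neq\emptyset\}$ is a Cohen--Macaulay bipartite graph (with bipartition $V,V'$) with no isolated vertex. Fix a labeling $V=\{x_1,\dots,x_n\}$, $V'=\{y_1,\dots,y_n\}$ and a partial order $\le$ on $V$ such that $\{x_i,y_j\}$ is an edge of $G$ if and only if $x_i\le x_j$, and let $\mathcal L(G)$ be the distributive lattice of all poset ideals of $(V,\le)$. Then the following are equivalent: (1) $\Delta$ is unmixed, and all minimal vertex covers of $\Delta$ have cardinality $|V|$; (2) there exists a segment $\mathcal S\subseteq\mathcal L(G)$ such that $H_{\mathcal S}^*=I(\Delta)$.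
   Context: $\mathcal F(\Delta)$ denotes the set of facets of $\Delta$. A vertex cover of $\Delta$ is a set of vertices meeting every facet; it is minimal if no proper subset is a vertex cover; $\Delta$ is unmixed if all minimal vertex covers have the same cardinality. Identify vertices with variables of $S=K[x_1,\dots,x_n,y_1,\dots,y_n]$. The facet ideal is $I(\Delta)=(\prod_{v\in F}v : F\in\mathcal F(\Delta))$; for a graph $G$, $I(G)$ is its edge ideal (generated by $uv$ for edges $\{u,v\}$), and $G$ is Cohen--Macaulay if $S/I(G)$ is Cohen--Macaulay (for such $G$ a labeling and partial order as in the claim always exist). $\mathcal L(G)$ consists of all poset ideals of $(V,\le)$ (including $\emptyset$), ordered by inclusion. For $\alpha\in\mathcal L(G)$ put $u_\alpha=\prod_{x_i\in\alpha}x_i\prod_{x_i\notin\alpha}y_i$, and for a subset $\mathcal S\subseteq\mathcal L(G)$ let $H_{\mathcal S}$ be the ideal of $S$ generated by $\{u_\alpha:\alpha\in\mathcal S\}$. A subset $\mathcal S$ of a lattice is a segment if for all $p,q\in\mathcal S$ with $p\le q$ the interval $[p,q]=\{r: p\le r\le q\}$ is contained in $\mathcal S$. For a squarefree monomial ideal $I=I_\Gamma$ (Stanley--Reisner ideal of a simplicial complex $\Gamma$ on the vertex set $W=V\cup V'$), $I^*:=I_{\Gamma^\vee}$, where $\Gamma^\vee=\{W\setminus F: F\notin\Gamma\}$ is the Alexander dual. *)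

theory Defs
  imports Main "HOL-Library.Multiset"
begin

definition simplicial_complex :: "'v set \<Rightarrow> 'v set set \<Rightarrow> bool" where
  "simplicial_complex W \<Delta> \<longleftrightarrow> finite W \<and> \<Delta> \<subseteq> Pow W \<and> \<Delta> \<noteq> {} \<and>
     (\<forall>F\<in>\<Delta>. \<forall>G. G \<subseteq> F \<longrightarrow> G \<in> \<Delta>)"

definition facets :: "'v set set \<Rightarrow> 'v set set" where
  "facets \<Delta> = {F \<in> \<Delta>. \<forall>G\<in>\<Delta>. F \<subseteq> G \<longrightarrow> G = F}"

definition vertex_cover :: "'v set \<Rightarrow> 'v set set \<Rightarrow> 'v set \<Rightarrow> bool" where
  "vertex_cover W \<Delta> C \<longleftrightarrow> C \<subseteq> W \<and> (\<forall>F\<in>facets \<Delta>. C \<inter> F \<noteq> {})"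

definition minimal_vertex_cover :: "'v set \<Rightarrow> 'v set set \<Rightarrow> 'v set \<Rightarrow> bool" where
  "minimal_vertex_cover W \<Delta> C \<longleftrightarrow> vertex_cover W \<Delta> C \<and> (\<forall>D. D \<subset> C \<longrightarrow> \<not> vertex_cover W \<Delta> D)"

definition unmixed :: "'v set \<Rightarrow> 'v set set \<Rightarrow> bool" where
  "unmixed W \<Delta> \<longleftrightarrow> (\<forall>C D. minimal_vertex_cover W \<Delta> C \<and> minimal_vertex_cover W \<Delta> D \<longrightarrow> card C = card D)"

text \<open>Monomials in the variables W are modelled as multisets over W (exponent vectors).
  A monomial ideal is represented by the set of monomials it contains (which determines it,
  over any field K).\<close>
definition monomial_ideal :: "'v set \<Rightarrow> 'v multiset set \<Rightarrow> 'v multiset set" where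
  "monomial_ideal W Gs = {m. set_mset m \<subseteq> W \<and> (\<exists>g\<in>Gs. g \<subseteq># m)}"

abbreviation sqf :: "'v set \<Rightarrow> 'v multiset" where
  "sqf F \<equiv> mset_set F"

definition facet_ideal :: "'v set \<Rightarrow> 'v set set \<Rightarrow> 'v multiset set" where
  "facet_ideal W \<Delta> = monomial_ideal W (sqf ` facets \<Delta>)"

definition SR_ideal :: "'v set \<Rightarrow> 'v set set \<Rightarrow> 'v multiset set" where
  "SR_ideal W \<Gamma> = monomial_ideal W {sqf F | F. F \<subseteq> W \<and> F \<notin> \<Gamma>}"

definition SR_complex :: "'v set \<Rightarrow> 'v multiset set \<Rightarrow> 'v set set" where
  "SR_complex W I = {F. F \<subseteq> W \<and> sqf F \<notin> I}"

definition alexander_dual :: "'v set \<Rightarrow> 'v set set \<Rightarrow> 'v set set" where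
  "alexander_dual W \<Gamma> = {W - F | F. F \<subseteq> W \<and> F \<notin> \<Gamma>}"

definition dual_ideal :: "'v set \<Rightarrow> 'v multiset set \<Rightarrow> 'v multiset set" where
  "dual_ideal W I = SR_ideal W (alexander_dual W (SR_complex W I))"

definition poset_ideals :: "'v set \<Rightarrow> 'v rel \<Rightarrow> 'v set set" where
  "poset_ideals V R = {\<alpha>. \<alpha> \<subseteq> V \<and> (\<forall>a\<in>\<alpha>. \<forall>b\<in>V. (b, a) \<in> R \<longrightarrow> b \<in> \<alpha>)}"

definition u_mon :: "nat \<Rightarrow> (nat \<Rightarrow> 'v) \<Rightarrow> (nat \<Rightarrow> 'v) \<Rightarrow> 'v set \<Rightarrow> 'v multiset" where
  "u_mon n x y \<alpha> = sqf ({x i | i. i \<in> {1..n} \<and> x i \<in> \<alpha>} \<union> {y i | i. i \<in> {1..n} \<and> x i \<notin> \<alpha>})"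

definition H_ideal :: "'v set \<Rightarrow> nat \<Rightarrow> (nat \<Rightarrow> 'v) \<Rightarrow> (nat \<Rightarrow> 'v) \<Rightarrow> 'v set set \<Rightarrow> 'v multiset set" where
  "H_ideal W n x y S = monomial_ideal W (u_mon n x y ` S)"

definition segment :: "'v set set \<Rightarrow> 'v set set \<Rightarrow> bool" where
  "segment L S \<longleftrightarrow> S \<subseteq> L \<and> (\<forall>p\<in>S. \<forall>q\<in>S. p \<subseteq> q \<longrightarrow> {r \<in> L. p \<subseteq> r \<and> r \<subseteq> q} \<subseteq> S)"

end

theory Submission
  imports Defs
begin


lemma sqf_sub_iff: "finite g \<Longrightarrow> sqf g \<subseteq># m \<longleftrightarrow> g \<subseteq> set_mset m"
proof
  assume "finite g" "sqf g \<subseteq># m"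
  then show "g \<subseteq> set_mset m" using set_mset_mono by fastforce
next
  assume "finite g" "g \<subseteq> set_mset m"
  then have "sqf g \<subseteq># sqf (set_mset m)" by (simp add: subset_imp_msubset_mset_set)
  then show "sqf g \<subseteq># m" using mset_set_set_mset_msubset subset_mset.order_trans by blast
qed

lemma mon_mem:
  assumes "finite W" "\<forall>g\<in>Gs. g \<subseteq> W"
  shows "m \<in> monomial_ideal W (sqf ` Gs) \<longleftrightarrow> set_mset m \<subseteq> W \<and> (\<exists>g\<in>Gs. g \<subseteq> set_mset m)"
proof -
  have "\<And>g. g \<in> Gs \<Longrightarrow> finite g" using assms finite_subset by blast
  then show ?thesis unfolding monomial_ideal_def using sqf_sub_iff by (auto; blast)
qed

lemma dual_mem:
  assumes W: "finite W" and G: "\<forall>g\<in>Gs. g \<subseteq> W"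
  shows "m \<in> dual_ideal W (monomial_ideal W (sqf ` Gs)) \<longleftrightarrow>
     set_mset m \<subseteq> W \<and> (\<forall>g\<in>Gs. g \<inter> set_mset m \<noteq> {})"
proof -
  let ?I = "monomial_ideal W (sqf ` Gs)"
  have fin: "\<And>F. F \<subseteq> W \<Longrightarrow> finite F" using W finite_subset by blast
  have inI: "\<And>F. F \<subseteq> W \<Longrightarrow> sqf F \<in> ?I \<longleftrightarrow> (\<exists>g\<in>Gs. g \<subseteq> F)"
    using mon_mem[OF W G] fin by simp
  have AD: "\<And>F. F \<subseteq> W \<Longrightarrow> F \<in> alexander_dual W (SR_complex W ?I) \<longleftrightarrow> (\<exists>g\<in>Gs. g \<subseteq> W - F)"
  proof -
    fix F assume F: "F \<subseteq> W"
    have "F \<in> alexander_dual W (SR_complex W ?I) \<longleftrightarrow> (\<exists>F'. F = W - F' \<and> F' \<subseteq> W \<and> sqf F' \<in> ?I)"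
      unfolding alexander_dual_def SR_complex_def by auto
    also have "\<dots> \<longleftrightarrow> sqf (W - F) \<in> ?I"
      using F by (metis Diff_partition Diff_subset double_diff order_refl)
    also have "\<dots> \<longleftrightarrow> (\<exists>g\<in>Gs. g \<subseteq> W - F)" using inI by auto
    finally show "?thesis F" .
  qed
  have nAD: "F \<notin> alexander_dual W (SR_complex W ?I) \<longleftrightarrow> (\<forall>g\<in>Gs. g \<inter> F \<noteq> {})"
    if F: "F \<subseteq> W" for F
  proof -
    have eqv: "\<forall>g\<in>Gs. (g \<subseteq> W - F \<longleftrightarrow> g \<inter> F = {})" using G by blast
    have "F \<notin> alexander_dual W (SR_complex W ?I) \<longleftrightarrow> \<not> (\<exists>g\<in>Gs. g \<subseteq> W - F)"
      using AD[OF F] by simp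
    also have "\<dots> \<longleftrightarrow> (\<forall>g\<in>Gs. g \<inter> F \<noteq> {})" using eqv by auto
    finally show ?thesis .
  qed
  have "m \<in> dual_ideal W ?I \<longleftrightarrow> set_mset m \<subseteq> W \<and>
      (\<exists>F. F \<subseteq> W \<and> F \<notin> alexander_dual W (SR_complex W ?I) \<and> F \<subseteq> set_mset m)"
    unfolding dual_ideal_def SR_ideal_def monomial_ideal_def using fin sqf_sub_iff by blast
  also have "\<dots> \<longleftrightarrow> set_mset m \<subseteq> W \<and> (\<forall>g\<in>Gs. g \<inter> set_mset m \<noteq> {})"
  proof
    assume H: "set_mset m \<subseteq> W \<and> (\<forall>g\<in>Gs. g \<inter> set_mset m \<noteq> {})"
    then have "set_mset m \<notin> alexander_dual W (SR_complex W ?I)" using nAD[of "set_mset m"] by simp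
    then show "set_mset m \<subseteq> W \<and>
      (\<exists>F. F \<subseteq> W \<and> F \<notin> alexander_dual W (SR_complex W ?I) \<and> F \<subseteq> set_mset m)"
      using H by blast
  next
    assume H: "set_mset m \<subseteq> W \<and>
      (\<exists>F. F \<subseteq> W \<and> F \<notin> alexander_dual W (SR_complex W ?I) \<and> F \<subseteq> set_mset m)"
    then obtain F where F: "F \<subseteq> W" "F \<notin> alexander_dual W (SR_complex W ?I)" "F \<subseteq> set_mset m"
      by blast
    then have "\<forall>g\<in>Gs. g \<inter> F \<noteq> {}" using nAD[OF F(1)] by simp
    then have "\<forall>g\<in>Gs. g \<inter> set_mset m \<noteq> {}" using F(3) by blast
    then show "set_mset m \<subseteq> W \<and> (\<forall>g\<in>Gs. g \<inter> set_mset m \<noteq> {})"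
      using H by blast
  qed
  finally show ?thesis .
qed

lemma dual_eq_iff:
  assumes W: "finite W" and G: "\<forall>g\<in>Gs. g \<subseteq> W" and F: "\<forall>F\<in>Fs. F \<subseteq> W"
  shows "dual_ideal W (monomial_ideal W (sqf ` Gs)) = monomial_ideal W (sqf ` Fs) \<longleftrightarrow>
     (\<forall>A\<subseteq>W. (\<forall>g\<in>Gs. g \<inter> A \<noteq> {}) \<longleftrightarrow> (\<exists>F\<in>Fs. F \<subseteq> A))"
proof
  assume eq: "dual_ideal W (monomial_ideal W (sqf ` Gs)) = monomial_ideal W (sqf ` Fs)"
  show "\<forall>A\<subseteq>W. (\<forall>g\<in>Gs. g \<inter> A \<noteq> {}) \<longleftrightarrow> (\<exists>F\<in>Fs. F \<subseteq> A)"
  proof (intro allI impI)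
    fix A assume A: "A \<subseteq> W"
    then have fA: "finite A" using W finite_subset by blast
    have "sqf A \<in> dual_ideal W (monomial_ideal W (sqf ` Gs)) \<longleftrightarrow> sqf A \<in> monomial_ideal W (sqf ` Fs)"
      using eq by simp
    then show "(\<forall>g\<in>Gs. g \<inter> A \<noteq> {}) \<longleftrightarrow> (\<exists>F\<in>Fs. F \<subseteq> A)"
      using dual_mem[OF W G] mon_mem[OF W F] fA A by simp
  qed
next
  assume H: "\<forall>A\<subseteq>W. (\<forall>g\<in>Gs. g \<inter> A \<noteq> {}) \<longleftrightarrow> (\<exists>F\<in>Fs. F \<subseteq> A)"
  show "dual_ideal W (monomial_ideal W (sqf ` Gs)) = monomial_ideal W (sqf ` Fs)"
  proof (rule set_eqI)
    fix m
    show "m \<in> dual_ideal W (monomial_ideal W (sqf ` Gs)) \<longleftrightarrow> m \<in> monomial_ideal W (sqf ` Fs)"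
    proof (cases "set_mset m \<subseteq> W")
      case True
      have "(\<forall>g\<in>Gs. g \<inter> set_mset m \<noteq> {}) \<longleftrightarrow> (\<exists>F\<in>Fs. F \<subseteq> set_mset m)"
        by (rule mp[OF spec[OF H] True])
      then show ?thesis using True by (simp add: dual_mem[OF W G] mon_mem[OF W F])
    next
      case False
      then show ?thesis by (simp add: dual_mem[OF W G] mon_mem[OF W F])
    qed
  qed
qed

lemma min_cover_exists:
  assumes "finite C" "vertex_cover W \<Delta> C"
  shows "\<exists>D\<subseteq>C. minimal_vertex_cover W \<Delta> D"
  using assms
proof (induction "card C" arbitrary: C rule: less_induct)
  case less
  show ?case
  proof (cases "minimal_vertex_cover W \<Delta> C")
    case True then show ?thesis by blast
  next
    case False
    then obtain D where D: "D \<subset> C" "vertex_cover W \<Delta> D"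
      using less.prems unfolding minimal_vertex_cover_def by blast
    then have "card D < card C" "finite D" using less.prems psubset_card_mono finite_subset by auto
    then show ?thesis using less.hyps D by (meson order.trans psubset_imp_subset)
  qed
qed



theorem theorem2p4:
  fixes V V' :: "'v set" and n :: nat and \<Delta> :: "'v set set"
    and x y :: "nat \<Rightarrow> 'v" and R :: "'v rel"
  assumes fin: "finite V" "finite V'"
    and disj: "V \<inter> V' = {}"
    and cardV: "card V = n" and cardV': "card V' = n"
    and cx: "simplicial_complex (V \<union> V') \<Delta>"
    and G_graph: "\<forall>F\<in>facets \<Delta>. F \<inter> V \<noteq> {} \<and> F \<inter> V' \<noteq> {} \<longrightarrow> card F = 2"
    and no_isolated: "\<forall>v\<in>V \<union> V'. \<exists>F\<in>facets \<Delta>. F \<inter> V \<noteq> {} \<and> F \<inter> V' \<noteq> {} \<and> v \<in> F"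
    and lab_x: "bij_betw x {1..n} V" and lab_y: "bij_betw y {1..n} V'"
    and po: "partial_order_on V R"
    and edges: "\<forall>i\<in>{1..n}. \<forall>j\<in>{1..n}.
        ({x i, y j} \<in> facets \<Delta> \<and> {x i, y j} \<inter> V \<noteq> {} \<and> {x i, y j} \<inter> V' \<noteq> {})
          \<longleftrightarrow> (x i, x j) \<in> R"
  shows "(unmixed (V \<union> V') \<Delta> \<and>
           (\<forall>C. minimal_vertex_cover (V \<union> V') \<Delta> C \<longrightarrow> card C = card V))
         \<longleftrightarrow>
         (\<exists>S. segment (poset_ideals V R) S \<and>
              dual_ideal (V \<union> V') (H_ideal (V \<union> V') n x y S) = facet_ideal (V \<union> V') \<Delta>)"
proof -
  define W where "W = V \<union> V'"
  define U where "U \<alpha> = (\<lambda>i. if x i \<in> \<alpha> then x i else y i) ` {1..n}" for \<alpha> :: "'v set"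
  have finW: "finite W" using fin W_def by simp
  have xV: "\<And>i. i \<in> {1..n} \<Longrightarrow> x i \<in> V" using lab_x bij_betwE by blast
  have yV': "\<And>i. i \<in> {1..n} \<Longrightarrow> y i \<in> V'" using lab_y bij_betwE by blast
  have injx: "inj_on x {1..n}" using lab_x bij_betw_def by blast
  have injy: "inj_on y {1..n}" using lab_y bij_betw_def by blast
  have xsurj: "\<And>v. v \<in> V \<Longrightarrow> \<exists>i\<in>{1..n}. v = x i" using lab_x by (metis bij_betw_imp_surj_on imageE)
  have ysurj: "\<And>v. v \<in> V' \<Longrightarrow> \<exists>i\<in>{1..n}. v = y i" using lab_y by (metis bij_betw_imp_surj_on imageE)
  have xy: "\<And>i j. i \<in> {1..n} \<Longrightarrow> j \<in> {1..n} \<Longrightarrow> x i \<noteq> y j" by (metis IntI empty_iff xV yV' disj)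
  have inj_sel: "inj_on (\<lambda>i. if P i then x i else y i) {1..n}" for P
  proof (rule inj_onI)
    fix i j assume ij: "i \<in> {1..n}" "j \<in> {1..n}"
      "(if P i then x i else y i) = (if P j then x j else y j)"
    then show "i = j" using xy[OF ij(1) ij(2)] xy[OF ij(2) ij(1)] injx injy ij(1,2)
      by (cases "P i"; cases "P j") (auto dest: inj_onD)
  qed
  have cardU: "card (U \<alpha>) = n" for \<alpha> unfolding U_def
    using card_image[OF inj_sel] by simp
  have UW: "U \<alpha> \<subseteq> W" for \<alpha> unfolding U_def W_def using xV yV' by auto
  have umon: "u_mon n x y \<alpha> = sqf (U \<alpha>)" for \<alpha>
  proof -
    have "{x i |i. i \<in> {1..n} \<and> x i \<in> \<alpha>} \<union> {y i |i. i \<in> {1..n} \<and> x i \<notin> \<alpha>} = U \<alpha>"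
      unfolding U_def by auto
    then show ?thesis unfolding u_mon_def by simp
  qed
  have Hid: "H_ideal W n x y S = monomial_ideal W (sqf ` (U ` S))" for S
    unfolding H_ideal_def umon by (simp add: image_comp comp_def)
  have facW: "\<And>F. F \<in> facets \<Delta> \<Longrightarrow> F \<subseteq> W"
    using cx unfolding simplicial_complex_def facets_def W_def by fastforce
  have Rrefl: "\<And>v. v \<in> V \<Longrightarrow> (v, v) \<in> R"
    using po unfolding partial_order_on_def preorder_on_def refl_on_def by blast
  have edgefac: "\<And>i j. i \<in> {1..n} \<Longrightarrow> j \<in> {1..n} \<Longrightarrow> (x i, x j) \<in> R \<Longrightarrow> {x i, y j} \<in> facets \<Delta>"
    using edges by blast
  have facstruct: "F \<subseteq> V \<or> F \<subseteq> V' \<or> (\<exists>i\<in>{1..n}. \<exists>j\<in>{1..n}. F = {x i, y j} \<and> (x i, x j) \<in> R)"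
    if F: "F \<in> facets \<Delta>" for F
  proof (cases "F \<inter> V \<noteq> {} \<and> F \<inter> V' \<noteq> {}")
    case True
    then have c2: "card F = 2" using G_graph F by blast
    from True obtain a b where ab: "a \<in> F" "a \<in> V" "b \<in> F" "b \<in> V'" by blast
    then have "a \<noteq> b" using disj by blast
    have finF: "finite F" by (rule finite_subset[OF facW[OF F] finW])
    have "card {a, b} = 2" using \<open>a \<noteq> b\<close> by simp
    moreover have "{a, b} \<subseteq> F" using ab by blast
    ultimately have Fab: "F = {a, b}" using c2 card_subset_eq[OF finF] by metis
    obtain i where i: "i \<in> {1..n}" "a = x i" using xsurj ab(2) by blast
    obtain j where j: "j \<in> {1..n}" "b = y j" using ysurj ab(4) by blast
    have "{x i, y j} \<in> facets \<Delta>" using F Fab i j by simp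
    then have "(x i, x j) \<in> R" using edges i(1) j(1) True Fab i j by blast
    then show ?thesis using Fab i j by blast
  next
    case False
    then show ?thesis using facW[OF F] W_def by blast
  qed
  have Ucov_mixed: "U \<alpha> \<inter> {x i, y j} \<noteq> {}"
    if "\<alpha> \<in> poset_ideals V R" "i \<in> {1..n}" "j \<in> {1..n}" "(x i, x j) \<in> R" for \<alpha> i j
  proof (cases "x j \<in> \<alpha>")
    case True
    then have "x i \<in> \<alpha>" using that xV unfolding poset_ideals_def by blast
    then have "x i \<in> U \<alpha>" unfolding U_def using that(2) by (auto intro!: image_eqI[where x=i])
    then show ?thesis by blast
  next
    case False
    then have "y j \<in> U \<alpha>" unfolding U_def using that(3) by (auto intro!: image_eqI[where x=j])
    then show ?thesis by blast
  qed
  have key: "dual_ideal W (H_ideal W n x y S) = facet_ideal W \<Delta> \<longleftrightarrow>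
     (\<forall>A\<subseteq>W. (\<forall>g\<in>U ` S. g \<inter> A \<noteq> {}) \<longleftrightarrow> (\<exists>F\<in>facets \<Delta>. F \<subseteq> A))" for S
    unfolding Hid facet_ideal_def
    by (rule dual_eq_iff[OF finW]) (use UW facW in auto)
  show ?thesis
    unfolding W_def[symmetric] key cardV
  proof
    assume L: "unmixed W \<Delta> \<and> (\<forall>C. minimal_vertex_cover W \<Delta> C \<longrightarrow> card C = n)"
    define S where "S = {\<alpha> \<in> poset_ideals V R. vertex_cover W \<Delta> (U \<alpha>)}"
    have seg: "segment (poset_ideals V R) S"
      unfolding segment_def
    proof (intro conjI ballI impI subsetI)
      show "\<alpha> \<in> poset_ideals V R" if "\<alpha> \<in> S" for \<alpha> using that S_def by blast
    next
      fix p q r assume p: "p \<in> S" and q: "q \<in> S" and pq: "p \<subseteq> q"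
        and r: "r \<in> {r \<in> poset_ideals V R. p \<subseteq> r \<and> r \<subseteq> q}"
      have rL: "r \<in> poset_ideals V R" using r by blast
      have "U r \<inter> F \<noteq> {}" if F: "F \<in> facets \<Delta>" for F
      proof -
        consider "F \<subseteq> V" | "F \<subseteq> V'" | "\<exists>i\<in>{1..n}. \<exists>j\<in>{1..n}. F = {x i, y j} \<and> (x i, x j) \<in> R"
          using facstruct[OF F] by blast
        then show ?thesis
        proof cases
          case 1
          have "U p \<inter> F \<noteq> {}" using p F unfolding S_def vertex_cover_def by blast
          then obtain i where i: "i \<in> {1..n}" "(if x i \<in> p then x i else y i) \<in> F"
            unfolding U_def by blast
          have "x i \<in> p"
          proof (rule ccontr)
            assume "x i \<notin> p"
            then have "y i \<in> F" using i(2) by simp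
            then have "y i \<in> V" using 1 by blast
            then show False using yV'[OF i(1)] disj by blast
          qed
          then have "x i \<in> r" "x i \<in> F" using r i by auto
          then have "x i \<in> U r" unfolding U_def using i(1) by (auto intro!: image_eqI[where x=i])
          then show ?thesis using \<open>x i \<in> F\<close> by blast
        next
          case 2
          have "U q \<inter> F \<noteq> {}" using q F unfolding S_def vertex_cover_def by blast
          then obtain i where i: "i \<in> {1..n}" "(if x i \<in> q then x i else y i) \<in> F"
            unfolding U_def by blast
          have "x i \<notin> q"
          proof
            assume "x i \<in> q"
            then have "x i \<in> F" using i(2) by simp
            then have "x i \<in> V'" using 2 by blast
            then show False using xV[OF i(1)] disj by blast
          qed
          then have "x i \<notin> r" "y i \<in> F" using r i by auto
          then have "y i \<in> U r" unfolding U_def using i(1) by (auto intro!: image_eqI[where x=i])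
          then show ?thesis using \<open>y i \<in> F\<close> by blast
        next
          case 3
          then obtain i j where "i \<in> {1..n}" "j \<in> {1..n}" "F = {x i, y j}" "(x i, x j) \<in> R" by blast
          then show ?thesis using Ucov_mixed[OF rL] by simp
        qed
      qed
      then have "vertex_cover W \<Delta> (U r)" unfolding vertex_cover_def using UW by blast
      then show "r \<in> S" unfolding S_def using rL by blast
    qed
    have cond: "\<forall>A\<subseteq>W. (\<forall>g\<in>U ` S. g \<inter> A \<noteq> {}) \<longleftrightarrow> (\<exists>F\<in>facets \<Delta>. F \<subseteq> A)"
    proof (intro allI impI iffI)
      fix A assume "A \<subseteq> W" "\<exists>F\<in>facets \<Delta>. F \<subseteq> A"
      then show "\<forall>g\<in>U ` S. g \<inter> A \<noteq> {}" unfolding S_def vertex_cover_def by blast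
    next
      fix A assume A: "A \<subseteq> W" and hit: "\<forall>g\<in>U ` S. g \<inter> A \<noteq> {}"
      show "\<exists>F\<in>facets \<Delta>. F \<subseteq> A"
      proof (rule ccontr)
        assume nf: "\<not> (\<exists>F\<in>facets \<Delta>. F \<subseteq> A)"
        have vc: "vertex_cover W \<Delta> (W - A)" unfolding vertex_cover_def using nf facW by blast
        have fWA: "finite (W - A)" using finW by simp
        obtain D where D: "D \<subseteq> W - A" "minimal_vertex_cover W \<Delta> D"
          using min_cover_exists[OF fWA vc] by (elim exE conjE)
        have Dc: "vertex_cover W \<Delta> D" using D(2) unfolding minimal_vertex_cover_def by (rule conjunct1)
        have L2: "\<forall>C. minimal_vertex_cover W \<Delta> C \<longrightarrow> card C = n" using L by (rule conjunct2)
        have cD: "card D = n" using L2 D(2) by simp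
        have finD: "finite D" using finite_subset[OF D(1) fWA] .
        have Dcov: "\<forall>F\<in>facets \<Delta>. D \<inter> F \<noteq> {}" using Dc unfolding vertex_cover_def by (rule conjunct2)
        have both: "x i \<in> D \<or> y i \<in> D" if i: "i \<in> {1..n}" for i
        proof -
          have "{x i, y i} \<in> facets \<Delta>" using edgefac[OF i i] Rrefl[OF xV[OF i]] by simp
          then have "D \<inter> {x i, y i} \<noteq> {}" by (rule bspec[OF Dcov])
          then show ?thesis by auto
        qed
        define g where "g i = (if x i \<in> D then x i else y i)" for i
        have gsub: "g ` {1..n} \<subseteq> D"
        proof (rule image_subsetI)
          fix i assume "i \<in> {1..n}"
          then show "g i \<in> D" using both[of i] unfolding g_def by auto
        qed
        have "card (g ` {1..n}) = n" unfolding g_def using card_image[OF inj_sel] by simp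
        then have gD: "g ` {1..n} = D" using card_subset_eq[OF finD gsub] cD by simp
        define \<alpha> where "\<alpha> = D \<inter> V"
        have "U \<alpha> = g ` {1..n}" unfolding U_def \<alpha>_def g_def
          using xV by (intro image_cong) auto
        then have UD: "U \<alpha> = D" using gD by simp
        have aL: "\<alpha> \<in> poset_ideals V R"
          unfolding poset_ideals_def
        proof (intro CollectI conjI ballI impI)
          show "\<alpha> \<subseteq> V" unfolding \<alpha>_def by blast
        next
          fix a b assume a: "a \<in> \<alpha>" and b: "b \<in> V" and ba: "(b, a) \<in> R"
          obtain j where j: "j \<in> {1..n}" "a = x j" using a xsurj \<alpha>_def by blast
          obtain i where i: "i \<in> {1..n}" "b = x i" using b xsurj by blast
          have "{x i, y j} \<in> facets \<Delta>" using edgefac[OF i(1) j(1)] ba i j by simp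
          then have "D \<inter> {x i, y j} \<noteq> {}" by (rule bspec[OF Dcov])
          then have "x i \<in> D \<or> y j \<in> D" by auto
          moreover have "y j \<notin> D"
          proof
            assume "y j \<in> D"
            then obtain k where k: "k \<in> {1..n}" "y j = g k" using gD by blast
            then have "x k \<notin> D" "y j = y k" unfolding g_def using xy[OF k(1) j(1)] by (auto split: if_splits)
            then have "j = k" using injy j(1) k(1) inj_onD by metis
            then show False using \<open>x k \<notin> D\<close> a j \<alpha>_def by blast
          qed
          ultimately show "b \<in> \<alpha>" using i b \<alpha>_def by blast
        qed
        have "\<alpha> \<in> S" unfolding S_def using aL UD Dc by simp
        then have "U \<alpha> \<inter> A \<noteq> {}" using hit by blast
        then show False using UD D by blast
      qed
    qed
    show "\<exists>S. segment (poset_ideals V R) S \<and>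
      (\<forall>A\<subseteq>W. (\<forall>g\<in>U ` S. g \<inter> A \<noteq> {}) \<longleftrightarrow> (\<exists>F\<in>facets \<Delta>. F \<subseteq> A))"
      using seg cond by blast
  next
    assume "\<exists>S. segment (poset_ideals V R) S \<and>
      (\<forall>A\<subseteq>W. (\<forall>g\<in>U ` S. g \<inter> A \<noteq> {}) \<longleftrightarrow> (\<exists>F\<in>facets \<Delta>. F \<subseteq> A))"
    then obtain S where P: "\<forall>A\<subseteq>W. (\<forall>g\<in>U ` S. g \<inter> A \<noteq> {}) \<longleftrightarrow> (\<exists>F\<in>facets \<Delta>. F \<subseteq> A)"
      by blast
    have Ucov: "vertex_cover W \<Delta> (U \<alpha>)" if "\<alpha> \<in> S" for \<alpha>
    proof -
      have "U \<alpha> \<inter> F \<noteq> {}" if F: "F \<in> facets \<Delta>" for F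
      proof -
        have PF: "(\<forall>g\<in>U ` S. g \<inter> F \<noteq> {}) \<longleftrightarrow> (\<exists>F'\<in>facets \<Delta>. F' \<subseteq> F)"
          by (rule mp[OF spec[OF P] facW[OF F]])
        have "\<exists>F'\<in>facets \<Delta>. F' \<subseteq> F" using F by blast
        then have "\<forall>g\<in>U ` S. g \<inter> F \<noteq> {}" using PF by simp
        then show ?thesis using \<open>\<alpha> \<in> S\<close> by blast
      qed
      then show ?thesis unfolding vertex_cover_def using UW by blast
    qed
    have mc: "card C = n" if C: "minimal_vertex_cover W \<Delta> C" for C
    proof (cases "\<exists>\<alpha>\<in>S. U \<alpha> \<subseteq> C")
      case True
      then obtain \<alpha> where "\<alpha> \<in> S" "U \<alpha> \<subseteq> C" by blast
      moreover have "\<not> U \<alpha> \<subset> C" using Ucov[OF \<open>\<alpha> \<in> S\<close>] C unfolding minimal_vertex_cover_def by blast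
      ultimately have "U \<alpha> = C" by blast
      then show ?thesis using cardU by blast
    next
      case False
      have CW: "C \<subseteq> W" using C unfolding minimal_vertex_cover_def vertex_cover_def by blast
      have "\<forall>g\<in>U ` S. g \<inter> (W - C) \<noteq> {}" using False UW by blast
      moreover have PA: "(\<forall>g\<in>U ` S. g \<inter> (W - C) \<noteq> {}) \<longleftrightarrow> (\<exists>F\<in>facets \<Delta>. F \<subseteq> W - C)"
        by (rule mp[OF spec[OF P] Diff_subset])
      ultimately obtain F where F: "F \<in> facets \<Delta>" "F \<subseteq> W - C" by blast
      have "\<forall>F\<in>facets \<Delta>. C \<inter> F \<noteq> {}" using C unfolding minimal_vertex_cover_def vertex_cover_def by blast
      then have "C \<inter> F \<noteq> {}" using F(1) by blast
      then show ?thesis using F(2) by blast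
    qed
    show "unmixed W \<Delta> \<and> (\<forall>C. minimal_vertex_cover W \<Delta> C \<longrightarrow> card C = n)"
      unfolding unmixed_def using mc by simp
  qed
qed

end
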